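(* $\gamma^{L-LD}(\mathcal{S})=\frac15$ and $\gamma^{L-LD}(\mathcal{H})=\frac14$; that is, every local locating-dominating code in the square grid has density at least $1/5$ and some such code has density exactly $1/5$, and every local locating-dominating code in the hexagonal grid has density at least $1/4$ and some such code has density exactly $1/4$.
   Context: The square grid $\mathcal{S}$ has vertex set $\mathbb{Z}^2$, with $\mathbf{u},\mathbf{v}$ adjacent iff $\mathbf{u}-\mathbf{v}\in\{(\pm1,0),(0,\pm1)\}$. The hexagonal grid $\mathcal{H}$ has vertex set $\mathbb{Z}^2$, with $\mathbf{u}=(i,j)$ and $\mathbf{v}$ adjacent iff $\mathbf{u}-\mathbf{v}\in\{(\pm1,0),(0,(-1)^{i+j+1})\}$. For a nonempty $C\subseteq\mathbb{Z}^2$ and vertex $\mathbf{u}$, $I(\mathbf{u})=N[\mathbf{u}]\cap C$ where $N[\mathbf{u}]$ is the closed neighbourhood. $C$ is a covering code if $I(\mathbf{u})\ne\emptyset$ for all $\mathbf{u}$; a local locating-dominating code if it is covering and $I(\mathbf{u})\ne I(\mathbf{v})$ for all adjacent $\mathbf{u},\mathbf{v}\notin C$. The density of $C$ is $D(C)=\limsup_{n\to\infty}|C\cap Q_n|/|Q_n|$ with $Q_n=\{(i,j)\in\mathbb{Z}^2:|i|\le n,|j|\le n\}$. $\gamma^{L-LD}(G)$ denotes the smallest density of a local locating-dominating code in $G$. *)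

theory Defs
  imports "HOL-Analysis.Analysis" "HOL-Library.Liminf_Limsup"
begin

type_synonym vertex = "int \<times> int"

definition sq_adj :: "vertex \<Rightarrow> vertex \<Rightarrow> bool" where
  "sq_adj u v \<longleftrightarrow> (fst u - fst v, snd u - snd v) \<in> {(1,0), (-1,0), (0,1), (0,-1)}"

definition hex_adj :: "vertex \<Rightarrow> vertex \<Rightarrow> bool" where
  "hex_adj u v \<longleftrightarrow> (fst u - fst v, snd u - snd v) \<in>
     {(1,0), (-1,0), (0, if even (fst u + snd u + 1) then 1 else -1)}"

definition closed_nbhd :: "(vertex \<Rightarrow> vertex \<Rightarrow> bool) \<Rightarrow> vertex \<Rightarrow> vertex set" where
  "closed_nbhd adj u = {v. v = u \<or> adj u v}"

definition I_set :: "(vertex \<Rightarrow> vertex \<Rightarrow> bool) \<Rightarrow> vertex set \<Rightarrow> vertex \<Rightarrow> vertex set" where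
  "I_set adj C u = closed_nbhd adj u \<inter> C"

definition covering_code :: "(vertex \<Rightarrow> vertex \<Rightarrow> bool) \<Rightarrow> vertex set \<Rightarrow> bool" where
  "covering_code adj C \<longleftrightarrow> C \<noteq> {} \<and> (\<forall>u. I_set adj C u \<noteq> {})"

definition local_LD_code :: "(vertex \<Rightarrow> vertex \<Rightarrow> bool) \<Rightarrow> vertex set \<Rightarrow> bool" where
  "local_LD_code adj C \<longleftrightarrow> covering_code adj C \<and>
     (\<forall>u v. adj u v \<and> u \<notin> C \<and> v \<notin> C \<longrightarrow> I_set adj C u \<noteq> I_set adj C v)"

definition Q :: "nat \<Rightarrow> vertex set" where
  "Q n = {(i,j). \<bar>i\<bar> \<le> int n \<and> \<bar>j\<bar> \<le> int n}"

definition density :: "vertex set \<Rightarrow> ereal" where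
  "density C = limsup (\<lambda>n. ereal (real (card (C \<inter> Q n)) / real (card (Q n))))"

definition gamma_LLD :: "(vertex \<Rightarrow> vertex \<Rightarrow> bool) \<Rightarrow> ereal" where
  "gamma_LLD adj = Inf {density C | C. local_LD_code adj C}"

end

theory Submission
  imports Defs "HOL-Real_Asymp.Real_Asymp"
begin

lemma Q_eq: "Q n = {-int n..int n} \<times> {-int n..int n}"
  unfolding Q_def by auto

lemma card_Q: "card (Q n) = (2*n+1)^2"
proof -
  have "card {-int n..int n} = 2*n+1" by simp
  then show ?thesis by (simp add: Q_eq card_cartesian_product power2_eq_square)
qed

lemma finite_Q: "finite (Q n)" by (simp add: Q_eq)

lemma cover_bound:
  assumes sym: "\<And>u v. adj u v \<Longrightarrow> adj v u"
    and near: "\<And>u v. adj u v \<Longrightarrow> \<bar>fst u - fst v\<bar> \<le> 1 \<and> \<bar>snd u - snd v\<bar> \<le> 1"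
    and cardN: "\<And>u. finite (closed_nbhd adj u) \<and> card (closed_nbhd adj u) = k"
    and cov: "covering_code adj C"
  shows "card (Q n) \<le> k * card (C \<inter> Q (Suc n))"
proof -
  have sub: "Q n \<subseteq> (\<Union>c\<in>C \<inter> Q (Suc n). closed_nbhd adj c)"
  proof
    fix u assume u: "u \<in> Q n"
    from cov obtain c where c: "c \<in> closed_nbhd adj u \<inter> C"
      unfolding covering_code_def I_set_def by blast
    then have cu: "c = u \<or> adj u c" by (simp add: closed_nbhd_def)
    have "c \<in> Q (Suc n)"
    proof (cases "c = u")
      case True then show ?thesis using u by (auto simp: Q_def)
    next
      case False
      then have "adj u c" using cu by simp
      from near[OF this] u show ?thesis
        by (cases u, cases c) (auto simp: Q_def)
    qed
    moreover have "u \<in> closed_nbhd adj c" using cu sym[of u c] by (auto simp: closed_nbhd_def)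
    ultimately show "u \<in> (\<Union>c\<in>C \<inter> Q (Suc n). closed_nbhd adj c)" using c by blast
  qed
  have fin: "finite (C \<inter> Q (Suc n))" using finite_Q by simp
  have "card (Q n) \<le> card (\<Union>c\<in>C \<inter> Q (Suc n). closed_nbhd adj c)"
    by (rule card_mono) (use fin cardN sub in auto)
  also have "\<dots> \<le> (\<Sum>c\<in>C \<inter> Q (Suc n). card (closed_nbhd adj c))"
    by (rule card_UN_le[OF fin])
  also have "\<dots> = k * card (C \<inter> Q (Suc n))" using cardN by simp
  finally show ?thesis .
qed

lemma perfect_bound:
  assumes sym: "\<And>u v. adj u v \<Longrightarrow> adj v u"
    and near: "\<And>u v. adj u v \<Longrightarrow> \<bar>fst u - fst v\<bar> \<le> 1 \<and> \<bar>snd u - snd v\<bar> \<le> 1"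
    and cardN: "\<And>u. finite (closed_nbhd adj u) \<and> card (closed_nbhd adj u) = k"
    and uniq: "\<And>x c c'. c \<in> C \<Longrightarrow> c' \<in> C \<Longrightarrow> c \<in> closed_nbhd adj x \<Longrightarrow> c' \<in> closed_nbhd adj x \<Longrightarrow> c = c'"
  shows "k * card (C \<inter> Q n) \<le> card (Q (Suc n))"
proof -
  have fin: "finite (C \<inter> Q n)" using finite_Q by simp
  have mem: "x \<in> closed_nbhd adj c \<Longrightarrow> c \<in> closed_nbhd adj x" for x c
    using sym[of c x] by (auto simp: closed_nbhd_def)
  have disj: "\<forall>i\<in>C \<inter> Q n. \<forall>j\<in>C \<inter> Q n. i \<noteq> j \<longrightarrow> closed_nbhd adj i \<inter> closed_nbhd adj j = {}"
    using uniq mem by blast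
  have sub: "(\<Union>c\<in>C \<inter> Q n. closed_nbhd adj c) \<subseteq> Q (Suc n)"
  proof clarify
    fix c x assume c: "c \<in> C" "c \<in> Q n" and x: "x \<in> closed_nbhd adj c"
    then have "x = c \<or> adj c x" by (simp add: closed_nbhd_def)
    then show "x \<in> Q (Suc n)"
    proof
      assume "x = c" then show ?thesis using c by (auto simp: Q_def)
    next
      assume "adj c x"
      from near[OF this] c show ?thesis by (cases x, cases c) (auto simp: Q_def)
    qed
  qed
  have "k * card (C \<inter> Q n) = (\<Sum>c\<in>C \<inter> Q n. card (closed_nbhd adj c))" using cardN by simp
  also have "\<dots> = card (\<Union>c\<in>C \<inter> Q n. closed_nbhd adj c)"
    by (rule card_UN_disjoint[symmetric]) (use fin cardN disj in auto)
  also have "\<dots> \<le> card (Q (Suc n))" by (rule card_mono[OF finite_Q sub])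
  finally show ?thesis .
qed

lemma lim_low: "(\<lambda>n::nat. ((2*real n - 1)/(2*real n + 1))^2 / real k) \<longlonglongrightarrow> 1 / real k"
proof -
  have "(\<lambda>n::nat. (2*real n - 1)/(2*real n + 1)) \<longlonglongrightarrow> 1" by real_asymp
  then have "(\<lambda>n::nat. ((2*real n - 1)/(2*real n + 1))^2) \<longlonglongrightarrow> 1^2" by (intro tendsto_intros)
  from tendsto_mult_right[OF this, of "1/real k"] show ?thesis by simp
qed

lemma lim_high: "(\<lambda>n::nat. ((2*real n + 3)/(2*real n + 1))^2 / real k) \<longlonglongrightarrow> 1 / real k"
proof -
  have "(\<lambda>n::nat. (2*real n + 3)/(2*real n + 1)) \<longlonglongrightarrow> 1" by real_asymp
  then have "(\<lambda>n::nat. ((2*real n + 3)/(2*real n + 1))^2) \<longlonglongrightarrow> 1^2" by (intro tendsto_intros)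
  from tendsto_mult_right[OF this, of "1/real k"] show ?thesis by simp
qed

lemma ratio_le:
  fixes a b c kk :: real
  assumes b: "b > 0" and k: "kk > 0" and h: "a^2 \<le> kk * c"
  shows "(a / b)^2 / kk \<le> c / b^2"
proof -
  have e: "(a / b)^2 / kk = (a^2 / kk) / b^2" by (simp add: power_divide)
  have "a^2 / kk \<le> c" using h k by (simp add: pos_divide_le_eq mult.commute)
  then have "(a^2 / kk) / b^2 \<le> c / b^2" using b by (intro divide_right_mono) auto
  then show ?thesis using e by simp
qed

lemma ratio_ge:
  fixes a b c kk :: real
  assumes b: "b > 0" and k: "kk > 0" and h: "kk * c \<le> a^2"
  shows "c / b^2 \<le> (a / b)^2 / kk"
proof -
  have e: "(a / b)^2 / kk = (a^2 / kk) / b^2" by (simp add: power_divide)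
  have "c \<le> a^2 / kk" using h k by (simp add: pos_le_divide_eq mult.commute)
  then have "c / b^2 \<le> (a^2 / kk) / b^2" using b by (intro divide_right_mono) auto
  then show ?thesis using e by simp
qed

lemma low_ineq:
  assumes sym: "\<And>u v. adj u v \<Longrightarrow> adj v u"
    and near: "\<And>u v. adj u v \<Longrightarrow> \<bar>fst u - fst v\<bar> \<le> 1 \<and> \<bar>snd u - snd v\<bar> \<le> 1"
    and cardN: "\<And>u. finite (closed_nbhd adj u) \<and> card (closed_nbhd adj u) = k"
    and cov: "covering_code adj C" and k: "k > 0" and n: "n \<ge> 1"
  shows "((2*real n - 1)/(2*real n + 1))^2 / real k \<le> real (card (C \<inter> Q n)) / real (card (Q n))"
proof -
  obtain m where m: "n = Suc m" using n by (cases n) auto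
  have "card (Q m) \<le> k * card (C \<inter> Q n)" using cover_bound[OF sym near cardN cov, of m] m by simp
  then have "(2*m+1)^2 \<le> k * card (C \<inter> Q n)" by (simp only: card_Q)
  then have "real ((2*m+1)^2) \<le> real (k * card (C \<inter> Q n))" by (simp only: of_nat_le_iff)
  then have h: "(2*real n - 1)^2 \<le> real k * real (card (C \<inter> Q n))" using m by simp
  have cq: "real (card (Q n)) = (2*real n+1)^2" by (simp add: card_Q)
  show ?thesis unfolding cq by (rule ratio_le[OF _ _ h]) (use k in auto)
qed

lemma high_ineq:
  assumes sym: "\<And>u v. adj u v \<Longrightarrow> adj v u"
    and near: "\<And>u v. adj u v \<Longrightarrow> \<bar>fst u - fst v\<bar> \<le> 1 \<and> \<bar>snd u - snd v\<bar> \<le> 1"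
    and cardN: "\<And>u. finite (closed_nbhd adj u) \<and> card (closed_nbhd adj u) = k"
    and uniq: "\<And>x c c'. c \<in> C \<Longrightarrow> c' \<in> C \<Longrightarrow> c \<in> closed_nbhd adj x \<Longrightarrow> c' \<in> closed_nbhd adj x \<Longrightarrow> c = c'"
    and k: "k > 0"
  shows "real (card (C \<inter> Q n)) / real (card (Q n)) \<le> ((2*real n + 3)/(2*real n + 1))^2 / real k"
proof -
  have "k * card (C \<inter> Q n) \<le> card (Q (Suc n))" using perfect_bound[OF sym near cardN uniq] .
  then have "k * card (C \<inter> Q n) \<le> (2*Suc n+1)^2" by (simp only: card_Q)
  then have "real (k * card (C \<inter> Q n)) \<le> real ((2*Suc n+1)^2)" by (simp only: of_nat_le_iff)
  then have h: "real k * real (card (C \<inter> Q n)) \<le> (2*real n+3)^2" by (simp add: add.commute)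
  have cq: "real (card (Q n)) = (2*real n+1)^2" by (simp add: card_Q)
  show ?thesis unfolding cq by (rule ratio_ge[OF _ _ h]) (use k in auto)
qed

lemma oo: "odd (x::int) \<Longrightarrow> odd y \<Longrightarrow> even (x+y)" by presburger

lemma lld_of_cover:
  assumes bip: "\<And>u v. adj u v \<Longrightarrow> odd (fst u + snd u + fst v + snd v)"
    and sym: "\<And>u v. adj u v \<Longrightarrow> adj v u"
    and cov: "covering_code adj C"
  shows "local_LD_code adj C"
  unfolding local_LD_code_def
proof (intro conjI cov allI impI)
  fix u v assume a: "adj u v \<and> u \<notin> C \<and> v \<notin> C"
  show "I_set adj C u \<noteq> I_set adj C v"
  proof
    assume eq: "I_set adj C u = I_set adj C v"
    from cov obtain c where c: "c \<in> I_set adj C u" unfolding covering_code_def by blast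
    then have c2: "c \<in> I_set adj C v" using eq by simp
    have "adj u c" using c a by (auto simp: I_set_def closed_nbhd_def)
    moreover have "adj v c" using c2 a by (auto simp: I_set_def closed_nbhd_def)
    ultimately have o1: "odd (fst u + snd u + fst c + snd c)" and o2: "odd (fst v + snd v + fst c + snd c)"
      and o3: "odd (fst u + snd u + fst v + snd v)" using bip a by auto
    have "even ((fst u + snd u + fst c + snd c) + (fst v + snd v + fst c + snd c))"
      using oo[OF o1 o2] .
    moreover have "(fst u + snd u + fst c + snd c) + (fst v + snd v + fst c + snd c)
       = (fst u + snd u + fst v + snd v) + 2 * (fst c + snd c)" by simp
    ultimately have "even (fst u + snd u + fst v + snd v)" by simp
    then show False using o3 by simp
  qed
qed

lemma density_exact:
  assumes sym: "\<And>u v. adj u v \<Longrightarrow> adj v u"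
    and near: "\<And>u v. adj u v \<Longrightarrow> \<bar>fst u - fst v\<bar> \<le> 1 \<and> \<bar>snd u - snd v\<bar> \<le> 1"
    and cardN: "\<And>u. finite (closed_nbhd adj u) \<and> card (closed_nbhd adj u) = k"
    and uniq: "\<And>x c c'. c \<in> C \<Longrightarrow> c' \<in> C \<Longrightarrow> c \<in> closed_nbhd adj x \<Longrightarrow> c' \<in> closed_nbhd adj x \<Longrightarrow> c = c'"
    and cov: "covering_code adj C" and k: "k > 0"
  shows "density C = ereal (1 / real k)"
proof -
  let ?f = "\<lambda>n. real (card (C \<inter> Q n)) / real (card (Q n))"
  have "?f \<longlonglongrightarrow> 1 / real k"
  proof (rule tendsto_sandwich[OF _ _ lim_low lim_high])
    show "\<forall>\<^sub>F n in sequentially. ((2*real n - 1)/(2*real n + 1))^2 / real k \<le> ?f n"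
      by (rule eventually_sequentiallyI[of 1], rule low_ineq[OF sym near cardN cov k])
    show "\<forall>\<^sub>F n in sequentially. ?f n \<le> ((2*real n + 3)/(2*real n + 1))^2 / real k"
      by (intro always_eventually allI high_ineq[OF sym near cardN uniq k])
  qed
  then have "(\<lambda>n. ereal (?f n)) \<longlonglongrightarrow> ereal (1 / real k)" by (rule tendsto_ereal)
  then show ?thesis unfolding density_def
    by (rule lim_imp_Limsup[OF trivial_limit_sequentially])
qed

lemma density_low:
  assumes sym: "\<And>u v. adj u v \<Longrightarrow> adj v u"
    and near: "\<And>u v. adj u v \<Longrightarrow> \<bar>fst u - fst v\<bar> \<le> 1 \<and> \<bar>snd u - snd v\<bar> \<le> 1"
    and cardN: "\<And>u. finite (closed_nbhd adj u) \<and> card (closed_nbhd adj u) = k"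
    and cov: "covering_code adj C" and k: "k > 0"
  shows "density C \<ge> ereal (1 / real k)"
proof -
  let ?f = "\<lambda>n. real (card (C \<inter> Q n)) / real (card (Q n))"
  let ?g = "\<lambda>n::nat. ((2*real n - 1)/(2*real n + 1))^2 / real k"
  have "(\<lambda>n. ereal (?g n)) \<longlonglongrightarrow> ereal (1 / real k)" by (rule tendsto_ereal[OF lim_low])
  then have "limsup (\<lambda>n. ereal (?g n)) = ereal (1 / real k)"
    by (rule lim_imp_Limsup[OF trivial_limit_sequentially])
  moreover have "limsup (\<lambda>n. ereal (?g n)) \<le> limsup (\<lambda>n. ereal (?f n))"
  proof (rule Limsup_mono, rule eventually_sequentiallyI[of 1])
    fix n :: nat assume "1 \<le> n"
    then show "ereal (?g n) \<le> ereal (?f n)" using low_ineq[OF sym near cardN cov k] by simp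
  qed
  ultimately show ?thesis unfolding density_def by (metis)
qed



lemma N_sq: "closed_nbhd sq_adj (a,b) = {(a,b),(a+1,b),(a-1,b),(a,b+1),(a,b-1)}"
  unfolding closed_nbhd_def sq_adj_def by (auto simp: algebra_simps)
lemma bip_sq: assumes "sq_adj (a,b) (c,d)" shows "odd (a+b+c+d)"
proof -
  have "(a=c+1 \<and> b=d) \<or> (a=c-1\<and>b=d) \<or> (a=c \<and> b=d+1) \<or> (a=c\<and> b = d-1)"
    using assms unfolding sq_adj_def by auto
  then show ?thesis by presburger
qed
definition C5 :: "vertex set" where "C5 = {(i,j). (i + 2*j) mod 5 = 0}"
lemma uniq_sq: "c \<in> C5 \<Longrightarrow> c' \<in> C5 \<Longrightarrow> c \<in> closed_nbhd sq_adj (a,b) \<Longrightarrow> c' \<in> closed_nbhd sq_adj (a,b) \<Longrightarrow> c = c'"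
  apply (simp add: N_sq C5_def)
  apply (elim disjE)
  apply simp_all
  apply presburger+
  done
lemma N_hex: "closed_nbhd hex_adj (a,b) = {(a,b),(a+1,b),(a-1,b),(a, if even (a+b+1) then b-1 else b+1)}"
  unfolding closed_nbhd_def hex_adj_def by (auto simp: algebra_simps split: if_splits)
lemma card_hex: "finite (closed_nbhd hex_adj u) \<and> card (closed_nbhd hex_adj u) = 4"
  by (cases u) (simp add: N_hex)
definition C4 :: "vertex set" where "C4 = {(i,j). (i + 2*j) mod 4 = 0}"
lemma uniq_hex0: "t = b - 1 \<or> t = b + 1 \<Longrightarrow> c \<in> C4 \<Longrightarrow> c' \<in> C4 \<Longrightarrow> c \<in> {(a,b),(a+1,b),(a-1,b),(a,t)} \<Longrightarrow> c' \<in> {(a,b),(a+1,b),(a-1,b),(a,t)} \<Longrightarrow> c = c'"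
  apply (simp add: C4_def)
  apply (elim disjE)
  apply simp_all
  apply presburger+
  done
lemma uniq_hex: "c \<in> C4 \<Longrightarrow> c' \<in> C4 \<Longrightarrow> c \<in> closed_nbhd hex_adj x \<Longrightarrow> c' \<in> closed_nbhd hex_adj x \<Longrightarrow> c = c'"
  apply (cases x)
  apply (simp only: N_hex)
  apply (rule uniq_hex0)
  apply auto
  done

lemma hex_adj_iff: "hex_adj (a,b) (c,d) \<longleftrightarrow> (b = d \<and> (c = a - 1 \<or> c = a + 1)) \<or> (c = a \<and> d = (if even (a+b+1) then b-1 else b+1))"
  unfolding hex_adj_def by (auto split: if_splits)
lemma sym_hex0: "hex_adj (a,b) (c,d) \<Longrightarrow> hex_adj (c,d) (a,b)"
  unfolding hex_adj_iff by presburger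
lemma sym_hex: "hex_adj u v \<Longrightarrow> hex_adj v u"
  using sym_hex0 by (cases u, cases v) simp
lemma near_hex: "hex_adj u v \<Longrightarrow> \<bar>fst u - fst v\<bar> \<le> 1 \<and> \<bar>snd u - snd v\<bar> \<le> 1"
  unfolding hex_adj_def by (auto split: if_splits)
lemma bip_hex: assumes "hex_adj (a,b) (c,d)" shows "odd (a+b+c+d)"
proof -
  have "(b = d \<and> (c = a - 1 \<or> c = a + 1)) \<or> (c = a \<and> (d = b - 1 \<or> d = b + 1))"
    using assms by (auto simp: hex_adj_iff split: if_splits)
  then show ?thesis by presburger
qed
lemma m5: "(x::int) mod 5 = 0 \<or> (x+1) mod 5 = 0 \<or> (x-1) mod 5 = 0 \<or> (x+2) mod 5 = 0 \<or> (x-2) mod 5 = 0"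
  by presburger

lemma m4: "(x::int) mod 4 = 0 \<or> (x+1) mod 4 = 0 \<or> (x-1) mod 4 = 0 \<or> ((x+2) mod 4 = 0 \<and> (x-2) mod 4 = 0)"
  by presburger

lemma cov_sq: "covering_code sq_adj C5"
  unfolding covering_code_def
proof (intro conjI allI)
  have "(0,0) \<in> C5" by (simp add: C5_def)
  then show "C5 \<noteq> {}" by blast
  fix u :: vertex
  obtain a b where u: "u = (a,b)" by (cases u)
  have "(a+2*b) mod 5 = 0 \<or> (a+1+2*b) mod 5 = 0 \<or> (a-1+2*b) mod 5 = 0 \<or> (a+2*(b+1)) mod 5 = 0 \<or> (a+2*(b-1)) mod 5 = 0"
    using m5[of "a+2*b"] by (simp add: algebra_simps)
  then show "I_set sq_adj C5 u \<noteq> {}" unfolding u I_set_def N_sq C5_def by auto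
qed
lemma cov_hex: "covering_code hex_adj C4"
  unfolding covering_code_def
proof (intro conjI allI)
  have "(0,0) \<in> C4" by (simp add: C4_def)
  then show "C4 \<noteq> {}" by blast
  fix u :: vertex
  obtain a b where u: "u = (a,b)" by (cases u)
  have "(a+2*b) mod 4 = 0 \<or> (a+1+2*b) mod 4 = 0 \<or> (a-1+2*b) mod 4 = 0 \<or> ((a+2*(b+1)) mod 4 = 0 \<and> (a+2*(b-1)) mod 4 = 0)"
    using m4[of "a+2*b"] by (simp add: algebra_simps)
  then show "I_set hex_adj C4 u \<noteq> {}" unfolding u I_set_def N_hex C4_def by (auto split: if_splits)
qed

lemma bip_sq': "sq_adj u v \<Longrightarrow> odd (fst u + snd u + fst v + snd v)"
  using bip_sq by (cases u, cases v) simp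
lemma bip_hex': "hex_adj u v \<Longrightarrow> odd (fst u + snd u + fst v + snd v)"
  using bip_hex by (cases u, cases v) simp
lemma sym_sq: "sq_adj u v \<Longrightarrow> sq_adj v u"
  unfolding sq_adj_def by auto
lemma near_sq: "sq_adj u v \<Longrightarrow> \<bar>fst u - fst v\<bar> \<le> 1 \<and> \<bar>snd u - snd v\<bar> \<le> 1"
  unfolding sq_adj_def by auto
lemma card_sq: "finite (closed_nbhd sq_adj u) \<and> card (closed_nbhd sq_adj u) = 5"
  by (cases u) (simp add: N_sq)
lemma uniq_sq': "c \<in> C5 \<Longrightarrow> c' \<in> C5 \<Longrightarrow> c \<in> closed_nbhd sq_adj x \<Longrightarrow> c' \<in> closed_nbhd sq_adj x \<Longrightarrow> c = c'"
  using uniq_sq by (cases x) blast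

lemma gamma_eq:
  assumes low: "\<And>C. local_LD_code adj C \<Longrightarrow> density C \<ge> d"
    and ex: "local_LD_code adj C0" "density C0 = d"
  shows "gamma_LLD adj = d"
  unfolding gamma_LLD_def
proof (rule antisym)
  show "Inf {density C |C. local_LD_code adj C} \<le> d" using ex by (intro Inf_lower2[of "density C0"]) auto
  show "d \<le> Inf {density C |C. local_LD_code adj C}" using low by (intro Inf_greatest) auto
qed

lemma sq_low: "local_LD_code sq_adj C \<Longrightarrow> density C \<ge> ereal (1/5)"
  using density_low[OF sym_sq near_sq card_sq, of C] by (simp add: local_LD_code_def)

lemma hex_low: "local_LD_code hex_adj C \<Longrightarrow> density C \<ge> ereal (1/4)"
  using density_low[OF sym_hex near_hex card_hex, of C] by (simp add: local_LD_code_def)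

lemma sq_ex: "local_LD_code sq_adj C5 \<and> density C5 = ereal (1/5)"
  using lld_of_cover[OF bip_sq' sym_sq cov_sq] density_exact[OF sym_sq near_sq card_sq uniq_sq' cov_sq] by simp

lemma hex_ex: "local_LD_code hex_adj C4 \<and> density C4 = ereal (1/4)"
  using lld_of_cover[OF bip_hex' sym_hex cov_hex] density_exact[OF sym_hex near_hex card_hex uniq_hex cov_hex] by simp

theorem mainTheorem12:
  shows "gamma_LLD sq_adj = ereal (1/5) \<and> gamma_LLD hex_adj = ereal (1/4)
    \<and> (\<forall>C. local_LD_code sq_adj C \<longrightarrow> density C \<ge> ereal (1/5))
    \<and> (\<exists>C. local_LD_code sq_adj C \<and> density C = ereal (1/5))
    \<and> (\<forall>C. local_LD_code hex_adj C \<longrightarrow> density C \<ge> ereal (1/4))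
    \<and> (\<exists>C. local_LD_code hex_adj C \<and> density C = ereal (1/4))"
  using gamma_eq[OF sq_low sq_ex[THEN conjunct1] sq_ex[THEN conjunct2]]
    gamma_eq[OF hex_low hex_ex[THEN conjunct1] hex_ex[THEN conjunct2]]
    sq_low hex_low sq_ex hex_ex by blast

end
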